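(* For every $n\ge1$: if $\Psi_n\in\mathrm{LTL}[\mathsf{X},\mathsf{wX},\mathsf{F},\mathsf{G}]$ satisfies $\Psi_n\equiv\Phi_n$ (i.e. $\mathcal L(\Psi_n)=\mathcal L(\Phi_n)$), then $\mathrm{size}(\Psi_n)\ge 2^n$.
   Context: Fix $n\ge1$ and atomic propositions $AP=\{\tilde p,\tilde q\}\cup\{p_1,\dots,p_n\}\cup\{q_1,\dots,q_n\}$ (all distinct), $\Sigma=2^{AP}$. Formulae in negation normal form are built from literals $p,\neg p$ ($p\in AP$) with $\land,\lor$ and temporal operators, interpreted on finite non-empty traces $\sigma\in\Sigma^+$ at positions $0\le i<|\sigma|$: $\mathsf{X}\phi$: $i+1<|\sigma|$ and $\phi$ at $i+1$; $\mathsf{wX}\phi$: $i+1=|\sigma|$ or $\phi$ at $i+1$; $\mathsf{F}\phi$/$\mathsf{G}\phi$: $\phi$ at some/every $j$ with $i\le j<|\sigma|$; $\mathsf O\phi$: $\phi$ at some $0\le j\le i$. $\mathcal L(\phi)=\{\sigma\in\Sigma^+:\sigma,0\models\phi\}$. $\mathrm{LTL}[\mathsf{X},\mathsf{wX},\mathsf{F},\mathsf{G}]$ is the set of such formulae using only temporal operators $\mathsf{X},\mathsf{wX},\mathsf{F},\mathsf{G}$. Size: literals 1, unary operators add 1, binary connectives sum sizes plus 1. $\Phi_n := \mathsf{F}\big(\tilde q\land\bigwedge_{i=1}^n\big((q_i\land\mathsf{O}(\tilde p\land p_i))\lor(\neg q_i\land\mathsf{O}(\tilde p\land\neg p_i))\big)\big)$.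 *)

theory Defs
  imports Main
begin

text \<open>Atomic propositions: Pt = p-tilde, Qt = q-tilde, P i = p_i, Q i = q_i.
  For a fixed n only Pt, Qt, P i, Q i with 1 \<le> i \<le> n are in AP.\<close>
datatype ap = Pt | Qt | P nat | Q nat

definition AP :: "nat \<Rightarrow> ap set" where
  "AP n = {Pt, Qt} \<union> P ` {1..n} \<union> Q ` {1..n}"

text \<open>Formulae in negation normal form.\<close>
datatype ltl =
    Lit ap | NLit ap
  | And ltl ltl | Or ltl ltl
  | Next ltl | WNext ltl | Fut ltl | Glob ltl | Once ltl

text \<open>Semantics on finite nonempty traces (lists of letters), position i < length.\<close>
fun sat :: "ap set list \<Rightarrow> nat \<Rightarrow> ltl \<Rightarrow> bool" where
  "sat w i (Lit p) = (p \<in> w ! i)"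
| "sat w i (NLit p) = (p \<notin> w ! i)"
| "sat w i (And a b) = (sat w i a \<and> sat w i b)"
| "sat w i (Or a b) = (sat w i a \<or> sat w i b)"
| "sat w i (Next a) = (i + 1 < length w \<and> sat w (i + 1) a)"
| "sat w i (WNext a) = (i + 1 = length w \<or> sat w (i + 1) a)"
| "sat w i (Fut a) = (\<exists>j. i \<le> j \<and> j < length w \<and> sat w j a)"
| "sat w i (Glob a) = (\<forall>j. i \<le> j \<and> j < length w \<longrightarrow> sat w j a)"
| "sat w i (Once a) = (\<exists>j. j \<le> i \<and> sat w j a)"

definition traces :: "nat \<Rightarrow> ap set list set" where
  "traces n = {w. w \<noteq> [] \<and> (\<forall>a \<in> set w. a \<subseteq> AP n)}"

definition lang :: "nat \<Rightarrow> ltl \<Rightarrow> ap set list set" where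
  "lang n \<phi> = {w \<in> traces n. sat w 0 \<phi>}"

fun size_ltl :: "ltl \<Rightarrow> nat" where
  "size_ltl (Lit p) = 1"
| "size_ltl (NLit p) = 1"
| "size_ltl (And a b) = size_ltl a + size_ltl b + 1"
| "size_ltl (Or a b) = size_ltl a + size_ltl b + 1"
| "size_ltl (Next a) = size_ltl a + 1"
| "size_ltl (WNext a) = size_ltl a + 1"
| "size_ltl (Fut a) = size_ltl a + 1"
| "size_ltl (Glob a) = size_ltl a + 1"
| "size_ltl (Once a) = size_ltl a + 1"

fun atoms :: "ltl \<Rightarrow> ap set" where
  "atoms (Lit p) = {p}"
| "atoms (NLit p) = {p}"
| "atoms (And a b) = atoms a \<union> atoms b"
| "atoms (Or a b) = atoms a \<union> atoms b"
| "atoms (Next a) = atoms a"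
| "atoms (WNext a) = atoms a"
| "atoms (Fut a) = atoms a"
| "atoms (Glob a) = atoms a"
| "atoms (Once a) = atoms a"

fun future_only :: "ltl \<Rightarrow> bool" where
  "future_only (Lit p) = True"
| "future_only (NLit p) = True"
| "future_only (And a b) = (future_only a \<and> future_only b)"
| "future_only (Or a b) = (future_only a \<and> future_only b)"
| "future_only (Next a) = future_only a"
| "future_only (WNext a) = future_only a"
| "future_only (Fut a) = future_only a"
| "future_only (Glob a) = future_only a"
| "future_only (Once a) = False"

definition LTL_XwXFG :: "nat \<Rightarrow> ltl set" where
  "LTL_XwXFG n = {\<phi>. future_only \<phi> \<and> atoms \<phi> \<subseteq> AP n}"

fun conj_list :: "ltl list \<Rightarrow> ltl" where
  "conj_list [a] = a"
| "conj_list (a # as) = And a (conj_list as)"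
| "conj_list [] = Or (Lit Pt) (NLit Pt)"

definition Phi :: "nat \<Rightarrow> ltl" where
  "Phi n = Fut (And (Lit Qt)
     (conj_list (map (\<lambda>i. Or (And (Lit (Q i)) (Once (And (Lit Pt) (Lit (P i)))))
                              (And (NLit (Q i)) (Once (And (Lit Pt) (NLit (P i))))))
                  [1..<n+1])))"

end

theory Submission
  imports Defs
begin

fun subf :: "ltl \<Rightarrow> ltl set" where
  "subf (Lit p) = {Lit p}"
| "subf (NLit p) = {NLit p}"
| "subf (And a b) = insert (And a b) (subf a \<union> subf b)"
| "subf (Or a b) = insert (Or a b) (subf a \<union> subf b)"
| "subf (Next a) = insert (Next a) (subf a)"
| "subf (WNext a) = insert (WNext a) (subf a)"
| "subf (Fut a) = insert (Fut a) (subf a)"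
| "subf (Glob a) = insert (Glob a) (subf a)"
| "subf (Once a) = insert (Once a) (subf a)"

lemma subf_self: "\<phi> \<in> subf \<phi>"
  by (cases \<phi>) auto

lemma finite_subf: "finite (subf \<phi>)"
  by (induction \<phi>) auto

lemma card_subf: "card (subf \<phi>) \<le> size_ltl \<phi>"
proof (induction \<phi>)
  case (And a b)
  have "card (subf (And a b)) \<le> Suc (card (subf a \<union> subf b))"
    by (simp add: card_insert_le_m1 card_insert_if finite_subf)
  also have "\<dots> \<le> Suc (card (subf a) + card (subf b))" using card_Un_le by simp
  finally show ?case using And by simp
next
  case (Or a b)
  have "card (subf (Or a b)) \<le> Suc (card (subf a \<union> subf b))"
    by (simp add: card_insert_if finite_subf)
  also have "\<dots> \<le> Suc (card (subf a) + card (subf b))" using card_Un_le by simp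
  finally show ?case using Or by simp
qed (auto simp: card_insert_if finite_subf)

lemma shiftA:
  assumes "future_only \<phi>" "j < length v"
  shows "sat (u @ v) (length u + j) \<phi> = sat v j \<phi>"
  using assms
proof (induction \<phi> arbitrary: j)
  case (Lit p) then show ?case by (simp add: nth_append)
next
  case (NLit p) then show ?case by (simp add: nth_append)
next
  case (Next a)
  show ?case
  proof (cases "Suc j < length v")
    case True
    then show ?thesis using Next.IH[of "Suc j"] Next.prems by simp
  next
    case False
    then show ?thesis by simp
  qed
next
  case (WNext a)
  show ?case
  proof (cases "Suc j < length v")
    case True
    then show ?thesis using WNext.IH[of "Suc j"] WNext.prems by simp
  next
    case False
    then show ?thesis using WNext.prems by simp
  qed
next
  case (Fut a)
  show ?case
  proof
    assume "sat (u @ v) (length u + j) (Fut a)"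
    then obtain k where k: "length u + j \<le> k" "k < length u + length v" "sat (u @ v) k a" by auto
    then have s1: "sat (u@v) (length u + (k - length u)) a" by simp
    have "k - length u < length v" using k by simp
    then have "sat v (k - length u) a" using Fut.IH[of "k - length u"] Fut.prems s1 by simp
    moreover have "j \<le> k - length u" "k - length u < length v" using k by auto
    ultimately show "sat v j (Fut a)" by auto
  next
    assume "sat v j (Fut a)"
    then obtain k where k: "j \<le> k" "k < length v" "sat v k a" by auto
    then have "sat (u@v) (length u + k) a" using Fut by simp
    then show "sat (u @ v) (length u + j) (Fut a)" using k
      by (auto intro!: exI[of _ "length u + k"])
  qed
next
  case (Glob a)
  show ?case
  proof
    assume H: "sat (u @ v) (length u + j) (Glob a)"
    show "sat v j (Glob a)"
    proof (simp, intro allI impI)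
      fix k assume k: "j \<le> k \<and> k < length v"
      then have "sat (u@v) (length u + k) a" using H by auto
      then show "sat v k a" using Glob k by simp
    qed
  next
    assume H: "sat v j (Glob a)"
    show "sat (u @ v) (length u + j) (Glob a)"
    proof (simp, intro allI impI)
      fix k assume k: "length u + j \<le> k \<and> k < length u + length v"
      then have "j \<le> k - length u \<and> k - length u < length v" by auto
      then have "sat v (k - length u) a" using H by simp
      moreover have "k - length u < length v" using k by auto
      ultimately have "sat (u@v) (length u + (k - length u)) a" using Glob.IH Glob.prems by simp
      then show "sat (u@v) k a" using k by simp
    qed
  qed
qed auto

lemma fut_split:
  assumes "i \<le> m" "m < length w"
  shows "sat w i (Fut a) = ((\<exists>j. i \<le> j \<and> j < m \<and> sat w j a) \<or> sat w m (Fut a))"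
  using assms by (auto, metis not_le, meson le_trans)

lemma glob_split:
  assumes "i \<le> m" "m < length w"
  shows "sat w i (Glob a) = ((\<forall>j. i \<le> j \<and> j < m \<longrightarrow> sat w j a) \<and> sat w m (Glob a))"
proof
  assume H: "sat w i (Glob a)"
  then show "(\<forall>j. i \<le> j \<and> j < m \<longrightarrow> sat w j a) \<and> sat w m (Glob a)"
    using assms by auto
next
  assume H: "(\<forall>j. i \<le> j \<and> j < m \<longrightarrow> sat w j a) \<and> sat w m (Glob a)"
  show "sat w i (Glob a)"
  proof (simp, intro allI impI)
    fix j assume "i \<le> j \<and> j < length w"
    then show "sat w j a" using H by (cases "j < m") auto
  qed
qed

lemma at_len:
  assumes "future_only \<phi>" "v \<noteq> []"
  shows "sat (u @ v) (length u) \<phi> = sat v 0 \<phi>"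
  using shiftA[of \<phi> 0 v u] assms by simp

lemma at_len2:
  assumes "future_only \<phi>" "v \<noteq> []" "v' \<noteq> []" "sat v 0 \<phi> = sat v' 0 \<phi>"
  shows "sat (u @ v) (length u) \<phi> = sat (u @ v') (length u) \<phi>"
  by (metis assms at_len)

lemma len_aux: "v \<noteq> [] \<Longrightarrow> i + 1 \<le> length u \<Longrightarrow> i + 1 < length (u @ v)"
  by (cases v) auto

lemma lemmaB:
  assumes "future_only \<phi>" "\<forall>\<chi>\<in>subf \<phi>. sat v 0 \<chi> = sat v' 0 \<chi>" "v \<noteq> []" "v' \<noteq> []"
    "i \<le> length u"
  shows "sat (u @ v) i \<phi> = sat (u @ v') i \<phi>"
  using assms
proof (induction \<phi> arbitrary: i)
  case (Lit p) then show ?case by (cases "i = length u") (auto simp: nth_append)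
next
  case (NLit p) then show ?case by (cases "i = length u") (auto simp: nth_append)
next
  case (And a b) then show ?case by auto
next
  case (Or a b) then show ?case by auto
next
  case (Next a)
  show ?case
  proof (cases "i = length u")
    case True
    then show ?thesis using at_len2[of "Next a" v v' u] Next.prems
      by (simp only: subf_self future_only.simps) blast
  next
    case False
    then have "i + 1 \<le> length u" using Next.prems by simp
    moreover have "i + 1 < length (u @ v)" "i + 1 < length (u @ v')" using Next.prems(3,4) \<open>i + 1 \<le> length u\<close> len_aux by auto
    moreover have "sat (u @ v) (i+1) a = sat (u @ v') (i+1) a"
      using Next.IH[of "i+1"] Next.prems \<open>i + 1 \<le> length u\<close> by simp
    ultimately show ?thesis by simp
  qed
next
  case (WNext a)
  show ?case
  proof (cases "i = length u")
    case True
    then show ?thesis using at_len2[of "WNext a" v v' u] WNext.prems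
      by (simp only: subf_self future_only.simps) blast
  next
    case False
    then have "i + 1 \<le> length u" using WNext.prems by simp
    moreover have "i + 1 < length (u @ v)" "i + 1 < length (u @ v')" using WNext.prems(3,4) \<open>i + 1 \<le> length u\<close> len_aux by auto
    moreover have "sat (u @ v) (i+1) a = sat (u @ v') (i+1) a"
      using WNext.IH[of "i+1"] WNext.prems \<open>i + 1 \<le> length u\<close> by simp
    ultimately show ?thesis by simp
  qed
next
  case (Fut a)
  have L: "sat (u @ v) (length u) (Fut a) = sat (u @ v') (length u) (Fut a)"
    using at_len2[of "Fut a" v v' u] Fut.prems subf_self[of "Fut a"]
    by blast
  have IH: "\<And>j. j < length u \<Longrightarrow> sat (u @ v) j a = sat (u @ v') j a"
    using Fut.IH Fut.prems by auto
  have "sat (u @ v) i (Fut a) = ((\<exists>j. i \<le> j \<and> j < length u \<and> sat (u@v) j a) \<or> sat (u@v) (length u) (Fut a))"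
    using Fut.prems by (intro fut_split) auto
  also have "\<dots> = ((\<exists>j. i \<le> j \<and> j < length u \<and> sat (u@v') j a) \<or> sat (u@v') (length u) (Fut a))"
    using IH L by blast
  also have "\<dots> = sat (u @ v') i (Fut a)"
    using Fut.prems by (intro fut_split[symmetric]) auto
  finally show ?case .
next
  case (Glob a)
  have L: "sat (u @ v) (length u) (Glob a) = sat (u @ v') (length u) (Glob a)"
    using at_len2[of "Glob a" v v' u] Glob.prems subf_self[of "Glob a"]
    by blast
  have IH: "\<And>j. j < length u \<Longrightarrow> sat (u @ v) j a = sat (u @ v') j a"
    using Glob.IH Glob.prems by auto
  have "sat (u @ v) i (Glob a) = ((\<forall>j. i \<le> j \<and> j < length u \<longrightarrow> sat (u@v) j a) \<and> sat (u@v) (length u) (Glob a))"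
    using Glob.prems by (intro glob_split) auto
  also have "\<dots> = ((\<forall>j. i \<le> j \<and> j < length u \<longrightarrow> sat (u@v') j a) \<and> sat (u@v') (length u) (Glob a))"
    using IH L by blast
  also have "\<dots> = sat (u @ v') i (Glob a)"
    using Glob.prems by (intro glob_split[symmetric]) auto
  finally show ?case .
next
  case (Once a) then show ?case by simp
qed

lemma conj_list_sat: "xs \<noteq> [] \<Longrightarrow> sat w i (conj_list xs) = (\<forall>x\<in>set xs. sat w i x)"
  by (induction xs rule: conj_list.induct) auto

definition pl :: "nat set \<Rightarrow> ap set" where "pl T = insert Pt (P ` T)"
definition ql :: "nat set \<Rightarrow> ap set" where "ql T = insert Qt (Q ` T)"

lemma phi_eval:
  assumes n: "n \<ge> 1" and T: "T \<subseteq> {1..n}" and B: "B \<subseteq> Pow {1..n}"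
    and vs: "set vs = insert {} (ql ` B)"
  shows "sat (pl T # vs) 0 (Phi n) \<longleftrightarrow> T \<in> B"
proof -
  let ?w = "pl T # vs"
  have ne: "[1..<n+1] \<noteq> []" using n by simp
  have Ptj: "\<And>j. j < length ?w \<Longrightarrow> Pt \<in> ?w ! j \<Longrightarrow> j = 0"
  proof (rule ccontr)
    fix j assume j: "j < length ?w" "Pt \<in> ?w ! j" "j \<noteq> 0"
    then have "?w ! j = vs ! (j - 1)" by (cases j) auto
    moreover have "vs ! (j - 1) \<in> set vs" using j by (cases j) auto
    ultimately show False using j vs by (auto simp: ql_def)
  qed
  have eq: "sat ?w 0 (Phi n) \<longleftrightarrow> (\<exists>k. k < length ?w \<and> Qt \<in> ?w ! k \<and>
      (\<forall>i\<in>{1..n}. (Q i \<in> ?w ! k \<and> (\<exists>j\<le>k. Pt \<in> ?w ! j \<and> P i \<in> ?w ! j)) \<or>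
                     (Q i \<notin> ?w ! k \<and> (\<exists>j\<le>k. Pt \<in> ?w ! j \<and> P i \<notin> ?w ! j))))"
    unfolding Phi_def using ne by (simp add: conj_list_sat atLeastAtMost_upt del: upt_Suc)
  show ?thesis
  proof
    assume "sat ?w 0 (Phi n)"
    then obtain k where k: "k < length ?w" "Qt \<in> ?w ! k" and
      H: "\<forall>i\<in>{1..n}. (Q i \<in> ?w ! k \<and> (\<exists>j\<le>k. Pt \<in> ?w ! j \<and> P i \<in> ?w ! j)) \<or>
                     (Q i \<notin> ?w ! k \<and> (\<exists>j\<le>k. Pt \<in> ?w ! j \<and> P i \<notin> ?w ! j))"
      using eq by blast
    have "k \<noteq> 0" using k by (cases k) (auto simp: pl_def)
    then have "?w ! k = vs ! (k - 1)" "vs ! (k - 1) \<in> set vs" using k by (cases k; auto)+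
    then obtain T' where T': "T' \<in> B" "?w ! k = ql T'" using vs k by (auto simp: ql_def)
    have "\<forall>i\<in>{1..n}. (i \<in> T') = (i \<in> T)"
    proof
      fix i assume i: "i \<in> {1..n}"
      have jj: "\<And>j. j \<le> k \<Longrightarrow> Pt \<in> ?w ! j \<Longrightarrow> j = 0" using Ptj k by simp
      from H[rule_format, OF i] consider (a) "Q i \<in> ?w ! k" "\<exists>j\<le>k. Pt \<in> ?w ! j \<and> P i \<in> ?w ! j"
        | (b) "Q i \<notin> ?w ! k" "\<exists>j\<le>k. Pt \<in> ?w ! j \<and> P i \<notin> ?w ! j" by blast
      then show "(i \<in> T') = (i \<in> T)"
      proof cases
        case a
        then obtain j where j: "j \<le> k" "Pt \<in> ?w ! j" "P i \<in> ?w ! j" by blast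
        then have "j = 0" using jj by blast
        then have "P i \<in> pl T" using j by simp
        then have "i \<in> T" by (auto simp: pl_def)
        moreover have "i \<in> T'" using a(1) T'(2) by (auto simp: ql_def)
        ultimately show ?thesis by simp
      next
        case b
        then obtain j where j: "j \<le> k" "Pt \<in> ?w ! j" "P i \<notin> ?w ! j" by blast
        then have "j = 0" using jj by blast
        then have "P i \<notin> pl T" using j by simp
        then have "i \<notin> T" by (auto simp: pl_def)
        moreover have "i \<notin> T'" using b(1) T'(2) by (auto simp: ql_def)
        ultimately show ?thesis by simp
      qed
    qed
    then have "T' = T" using T T' B by blast
    then show "T \<in> B" using T' by simp
  next
    assume TB: "T \<in> B"
    then have "ql T \<in> set vs" using vs by simp
    then obtain m where m: "m < length vs" "vs ! m = ql T" by (meson in_set_conv_nth)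
    show "sat ?w 0 (Phi n)" unfolding eq
    proof (intro exI[of _ "Suc m"] conjI ballI)
      show "Suc m < length ?w" using m by simp
      show "Qt \<in> ?w ! Suc m" using m by (simp add: ql_def)
      fix i assume i: "i \<in> {1..n}"
      show "(Q i \<in> ?w ! Suc m \<and> (\<exists>j\<le>Suc m. Pt \<in> ?w ! j \<and> P i \<in> ?w ! j)) \<or>
                     (Q i \<notin> ?w ! Suc m \<and> (\<exists>j\<le>Suc m. Pt \<in> ?w ! j \<and> P i \<notin> ?w ! j))"
      proof (cases "i \<in> T")
        case True
        then show ?thesis using m by (intro disjI1) (auto simp: ql_def pl_def intro!: exI[of _ 0])
      next
        case False
        then show ?thesis using m by (intro disjI2) (auto simp: ql_def pl_def intro!: exI[of _ 0])
      qed
    qed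
  qed
qed

lemma pl_AP: "T \<subseteq> {1..n} \<Longrightarrow> pl T \<subseteq> AP n"
  by (auto simp: pl_def AP_def)

lemma ql_AP: "T \<subseteq> {1..n} \<Longrightarrow> ql T \<subseteq> AP n"
  by (auto simp: ql_def AP_def)

theorem lemma5:
  fixes n :: nat and \<Psi> :: ltl
  assumes "n \<ge> 1"
    and "\<Psi> \<in> LTL_XwXFG n"
    and "lang n \<Psi> = lang n (Phi n)"
  shows "size_ltl \<Psi> \<ge> 2 ^ n"
proof -
  let ?S = "subf \<Psi>"
  have fo: "future_only \<Psi>" using assms(2) by (simp add: LTL_XwXFG_def)
  define vB where "vB B = (SOME xs. set xs = insert {} (ql ` B))" for B
  have vB: "set (vB B) = insert {} (ql ` B)" if "B \<subseteq> Pow {1..n}" for B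
  proof -
    have "finite (Pow {1..n})" by simp
    then have "finite B" using that by (rule finite_subset[rotated])
    then have "finite (insert {} (ql ` B))" by simp
    then have "\<exists>xs. set xs = insert {} (ql ` B)" by (rule finite_list)
    then show ?thesis unfolding vB_def by (rule someI_ex)
  qed
  have tr: "pl T # vB B \<in> traces n" if "T \<subseteq> {1..n}" "B \<subseteq> Pow {1..n}" for T B
  proof -
    have "\<forall>a\<in>B. ql a \<subseteq> AP n" using that(2) ql_AP by blast
    then show ?thesis using vB[OF that(2)] pl_AP[OF that(1)] unfolding traces_def by auto
  qed
  have key: "sat (pl T # vB B) 0 \<Psi> \<longleftrightarrow> T \<in> B" if "T \<subseteq> {1..n}" "B \<subseteq> Pow {1..n}" for T B
  proof -
    have "sat (pl T # vB B) 0 \<Psi> \<longleftrightarrow> pl T # vB B \<in> lang n \<Psi>" using tr[OF that] unfolding lang_def by blast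
    also have "\<dots> \<longleftrightarrow> sat (pl T # vB B) 0 (Phi n)" using tr[OF that] assms(3) unfolding lang_def by blast
    also have "\<dots> \<longleftrightarrow> T \<in> B" using phi_eval[OF assms(1) that vB[OF that(2)]] .
    finally show ?thesis .
  qed
  define g where "g B = {\<chi>\<in>?S. sat (vB B) 0 \<chi>}" for B
  have inj: "inj_on g (Pow (Pow {1..n}))"
  proof (rule inj_onI)
    fix B B' assume B: "B \<in> Pow (Pow {1..n})" and B': "B' \<in> Pow (Pow {1..n})" and gg: "g B = g B'"
    have eqv: "\<forall>\<chi>\<in>?S. sat (vB B) 0 \<chi> = sat (vB B') 0 \<chi>"
    proof
      fix \<chi> assume "\<chi> \<in> ?S"
      then show "sat (vB B) 0 \<chi> = sat (vB B') 0 \<chi>" using gg unfolding g_def by blast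
    qed
    have BB: "B \<subseteq> Pow {1..n}" "B' \<subseteq> Pow {1..n}" using B B' by simp_all
    have ne: "vB B \<noteq> []" "vB B' \<noteq> []" using vB[OF BB(1)] vB[OF BB(2)] by fastforce+
    have "\<forall>T. T \<subseteq> {1..n} \<longrightarrow> (T \<in> B \<longleftrightarrow> T \<in> B')"
    proof (intro allI impI)
      fix T assume T: "T \<subseteq> {1..n}"
      have "sat ([pl T] @ vB B) 0 \<Psi> = sat ([pl T] @ vB B') 0 \<Psi>"
        by (rule lemmaB[OF fo eqv ne]) simp
      then show "T \<in> B \<longleftrightarrow> T \<in> B'" using key[OF T BB(1)] key[OF T BB(2)] by simp
    qed
    then show "B = B'" using BB by (intro set_eqI) (metis PowD subsetD)
  qed
  have sub: "g ` Pow (Pow {1..n}) \<subseteq> Pow ?S" unfolding g_def by auto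
  have "card (Pow (Pow {1..n::nat})) \<le> card (Pow ?S)"
    by (rule card_inj_on_le[OF inj sub]) (simp add: finite_subf)
  moreover have "card (Pow (Pow {1..n::nat})) = 2 ^ (2 ^ n)" by (simp add: card_Pow)
  moreover have "card (Pow ?S) = 2 ^ card ?S" by (simp add: card_Pow finite_subf)
  ultimately have "(2::nat) ^ (2 ^ n) \<le> 2 ^ card ?S" by simp
  then have "2 ^ n \<le> card ?S" using power_increasing_iff[of "2::nat" "2^n" "card ?S"] by linarith
  then show ?thesis using card_subf[of \<Psi>] by simp
qed

end
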